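(* Let $t_1,t_2:\Sigma^*\to\Omega^*$ be rational partial functions which are not adjacent. Then there are words $x,y,z\in\Sigma^*$ such that $xy^*z\subseteq\mathrm{dom}(t_1)\cap\mathrm{dom}(t_2)$ and $\|t_1(xy^kz),t_2(xy^kz)\|\in\Omega(k)$. In particular, there is a constant $c$ such that for each $k\in\mathbb N$ there exists a word $x\in\mathrm{dom}(t_1)\cap\mathrm{dom}(t_2)$ with $|x|\le c\,k$ (i.e. $|x|\in O(k)$) and $\|t_1(x),t_2(x)\|\ge k$.
   Context: For words $x,y$, $x\wedge y$ is their longest common suffix and $\|x,y\|=|x|+|y|-2|x\wedge y|$. Two partial functions $t_1,t_2$ are adjacent if $\sup\{\|t_1(w),t_2(w)\|:w\in\mathrm{dom}(t_1)\cap\mathrm{dom}(t_2)\}<\infty$, with the convention $\sup\emptyset=-\infty$. A partial function is rational if its graph is a rational subset of $\Sigma^*\times\Omega^*$. *)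

theory Defs
  imports Main "HOL-Library.Extended_Real" "HOL-Library.Landau_Symbols"
begin

fun lcp :: "'a list \<Rightarrow> 'a list \<Rightarrow> 'a list" where
  "lcp (a # xs) (b # ys) = (if a = b then a # lcp xs ys else [])"
| "lcp _ _ = []"

definition lcsuffix :: "'a list \<Rightarrow> 'a list \<Rightarrow> 'a list" where
  "lcsuffix x y = rev (lcp (rev x) (rev y))"

definition wdist :: "'a list \<Rightarrow> 'a list \<Rightarrow> nat" where
  "wdist x y = length x + length y - 2 * length (lcsuffix x y)"

text \<open>Adjacency, with sup of the empty set being -\<infinity> (as in ereal).\<close>
definition adjacent :: "('a list \<Rightarrow> 'b list option) \<Rightarrow> ('a list \<Rightarrow> 'b list option) \<Rightarrow> bool" where
  "adjacent t1 t2 \<longleftrightarrow>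
     (SUP w \<in> dom t1 \<inter> dom t2. ereal (real (wdist (the (t1 w)) (the (t2 w))))) < \<infinity>"

definition pconc :: "('a list \<times> 'b list) set \<Rightarrow> ('a list \<times> 'b list) set \<Rightarrow> ('a list \<times> 'b list) set" where
  "pconc A B = {(fst p @ fst q, snd p @ snd q) | p q. p \<in> A \<and> q \<in> B}"

inductive_set pstar :: "('a list \<times> 'b list) set \<Rightarrow> ('a list \<times> 'b list) set" for A where
  pstar_nil: "([], []) \<in> pstar A"
| pstar_step: "p \<in> A \<Longrightarrow> q \<in> pstar A \<Longrightarrow> (fst p @ fst q, snd p @ snd q) \<in> pstar A"

inductive_set rational_sets :: "('a list \<times> 'b list) set set" where
  rat_finite: "finite A \<Longrightarrow> A \<in> rational_sets"
| rat_union: "A \<in> rational_sets \<Longrightarrow> B \<in> rational_sets \<Longrightarrow> A \<union> B \<in> rational_sets"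
| rat_conc: "A \<in> rational_sets \<Longrightarrow> B \<in> rational_sets \<Longrightarrow> pconc A B \<in> rational_sets"
| rat_star: "A \<in> rational_sets \<Longrightarrow> pstar A \<in> rational_sets"

definition graph_of :: "('a list \<Rightarrow> 'b list option) \<Rightarrow> ('a list \<times> 'b list) set" where
  "graph_of t = {(w, v). t w = Some v}"

definition rational_fun :: "('a list \<Rightarrow> 'b list option) \<Rightarrow> bool" where
  "rational_fun t \<longleftrightarrow> graph_of t \<in> rational_sets"

definition wpow :: "'a list \<Rightarrow> nat \<Rightarrow> 'a list" where
  "wpow y k = concat (replicate k y)"

end

theory Submission
  imports Defs
begin


lemma lcp_sym: "lcp a b = lcp b a"
  by (induction a b rule: lcp.induct) auto

lemma lcp_len_le1: "length (lcp a b) \<le> length a"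
  by (induction a b rule: lcp.induct) auto

lemma lcp_len_le2: "length (lcp a b) \<le> length b"
  by (induction a b rule: lcp.induct) auto

lemma lcp_take: "n \<le> length (lcp a b) \<Longrightarrow> take n a = take n b"
proof (induction a b arbitrary: n rule: lcp.induct)
  case (1 a xs b ys)
  then show ?case by (cases n) (auto split: if_splits)
qed auto

lemma lcp_append_same: "lcp (c @ a) (c @ b) = c @ lcp a b"
  by (induction c) auto

lemma wpow_0[simp]: "wpow y 0 = []" by (simp add: wpow_def)
lemma wpow_Suc: "wpow y (Suc k) = y @ wpow y k" by (simp add: wpow_def)
lemma wpow_Suc2: "wpow y (Suc k) = wpow y k @ y"
  by (simp add: wpow_def replicate_append_same[symmetric])
lemma wpow_len[simp]: "length (wpow y k) = k * length y"
  by (induction k) (auto simp: wpow_Suc)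
lemma wpow_Nil[simp]: "wpow [] k = []" by (simp add: wpow_def)
lemma wpow_add: "wpow y (a + b) = wpow y a @ wpow y b"
  by (induction a) (auto simp: wpow_Suc)
lemma wpow_rev: "rev (wpow v k) = wpow (rev v) k"
  by (induction k) (simp_all add: wpow_Suc wpow_Suc2[symmetric])
lemma wpow_comm: "V1 @ S = S @ V2 \<Longrightarrow> wpow V1 k @ S = S @ wpow V2 k"
proof (induction k)
  case (Suc k)
  have "wpow V1 (Suc k) @ S = V1 @ (wpow V1 k @ S)" by (simp add: wpow_Suc)
  also have "\<dots> = (V1 @ S) @ wpow V2 k" using Suc by simp
  also have "\<dots> = S @ wpow V2 (Suc k)" using Suc by (simp add: wpow_Suc)
  finally show ?case .
qed simp

lemma core_bound:
  assumes len: "length V1 = p" "length V2 = p" "p > 0" and W: "length W1 \<le> length W2"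
    and nS: "\<not> (\<exists>S. W2 = W1 @ S \<and> V1 @ S = S @ V2)"
    and k: "k \<ge> length W2 + 2"
  shows "length (lcp (W1 @ wpow V1 k @ U1) (W2 @ wpow V2 k @ U2)) < length W2 + p"
proof (rule ccontr)
  define o1 where "o1 = W1 @ wpow V1 k @ U1"
  define o2 where "o2 = W2 @ wpow V2 k @ U2"
  assume "\<not> ?thesis"
  hence L: "length W2 + p \<le> length (lcp o1 o2)" unfolding o1_def o2_def by simp
  have t: "take (length W2 + p) o1 = take (length W2 + p) o2" using lcp_take[OF L] .
  obtain k' where kk: "k = Suc k'" using k by (cases k) auto
  have t2: "take (length W2 + p) o2 = W2 @ V2" unfolding o2_def kk
    using len by (simp add: wpow_Suc)
  have "take (length W1) o1 = take (length W1) o2"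
    using lcp_take[of "length W1" o1 o2] L W by simp
  hence "take (length W1) W2 = W1" unfolding o1_def o2_def using W by simp
  then obtain S where S: "W2 = W1 @ S" by (metis append_take_drop_id)
  have lS: "length S \<le> length W2" using S by simp
  have e0a: "take (length W2 + p) o1 = W1 @ take (length S + p) (wpow V1 k @ U1)"
    unfolding o1_def S by simp
  have e0b: "take (length S + p) (wpow V1 k @ U1) = take (length S + p) (wpow V1 k)"
  proof -
    have "(length W2 + 2) * p \<le> k * p" using k by (rule mult_le_mono1)
    moreover have "length W2 \<le> length W2 * p" using len by simp
    moreover have "(length W2 + 2) * p = length W2 * p + 2 * p" by (simp add: algebra_simps)
    ultimately have "length S + p \<le> k * p" using lS len by linarith
    thus ?thesis using len by simp
  qed
  have e1: "take (length S + p) (wpow V1 k) = S @ V2" using t t2 S e0a e0b by simp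
  have e2: "take (length S + p) (wpow V1 k) = V1 @ take (length S) (wpow V1 k')"
    unfolding kk wpow_Suc using len by simp
  have lk': "length S \<le> k' * p"
  proof -
    have "(length W2 + 1) * p \<le> k' * p" using k kk by (intro mult_le_mono1) simp
    moreover have "length W2 \<le> length W2 * p" using len by simp
    moreover have "(length W2 + 1) * p = length W2 * p + p" by (simp add: algebra_simps)
    ultimately show ?thesis using lS len by linarith
  qed
  have e3: "take (length S) (wpow V1 k) = take (length S) (wpow V1 k')"
    unfolding kk wpow_Suc2 using lk' len by simp
  have "S = take (length S) (S @ V2)" by simp
  also have "\<dots> = take (length S) (wpow V1 k)" using e1
    by (metis le_add1 take_take min_def)
  finally have "S = take (length S) (wpow V1 k')" using e3 by simp
  hence "V1 @ S = S @ V2" using e1 e2 by simp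
  thus False using nS S by blast
qed

definition Dp :: "'a list \<Rightarrow> 'a list \<Rightarrow> 'a list \<Rightarrow> 'a list \<Rightarrow> 'a list \<Rightarrow> 'a list \<Rightarrow> nat \<Rightarrow> nat" where
  "Dp W1 V1 U1 W2 V2 U2 k = length (W1 @ wpow V1 k @ U1) + length (W2 @ wpow V2 k @ U2)
     - 2 * length (lcp (W1 @ wpow V1 k @ U1) (W2 @ wpow V2 k @ U2))"

lemma Dp_sym: "Dp W1 V1 U1 W2 V2 U2 k = Dp W2 V2 U2 W1 V1 U1 k"
  unfolding Dp_def by (simp add: lcp_sym)

lemma Dp_ge1: "Dp W1 V1 U1 W2 V2 U2 k \<ge> length (W1 @ wpow V1 k @ U1) - length (W2 @ wpow V2 k @ U2)"
  unfolding Dp_def using lcp_len_le2[of "W1 @ wpow V1 k @ U1" "W2 @ wpow V2 k @ U2"] by linarith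

lemma Dp_const:
  assumes "W2 = W1 @ S" "V1 @ S = S @ V2"
  shows "Dp W1 V1 U1 W2 V2 U2 k = Dp W1 V1 U1 W2 V2 U2 0"
proof -
  have lv: "length V1 = length V2" using arg_cong[OF assms(2), of length] by simp
  have o2: "W2 @ wpow V2 k @ U2 = (W1 @ wpow V1 k) @ (S @ U2)"
    using wpow_comm[OF assms(2), of k] assms(1) by (metis append.assoc)
  have l: "lcp (W1 @ wpow V1 k @ U1) (W2 @ wpow V2 k @ U2) = (W1 @ wpow V1 k) @ lcp U1 (S @ U2)"
    unfolding o2 by (metis append.assoc lcp_append_same)
  have l0: "lcp (W1 @ U1) (W2 @ U2) = W1 @ lcp U1 (S @ U2)"
    using assms(1) by (simp add: lcp_append_same)
  have b: "length (lcp U1 (S @ U2)) \<le> length U1" by (rule lcp_len_le1)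
  show ?thesis unfolding Dp_def l using l0 b assms(1) lv by simp
qed

lemma Omega_from_bound:
  assumes "\<And>k. k \<ge> N \<Longrightarrow> real (f k) \<ge> c * real k" "c > 0"
  shows "(\<lambda>k. real (f k)) \<in> \<Omega>(\<lambda>k. real k)"
proof (rule landau_omega.bigI[of c])
  show "c > 0" by fact
  show "\<forall>\<^sub>F x in at_top. norm (real (f x)) \<ge> c * norm (real x)"
    unfolding eventually_at_top_linorder using assms(1) by auto
qed

lemma Dp_eq_case:
  assumes len: "length V1 = p" "length V2 = p" "p > 0" and W: "length W1 \<le> length W2"
  shows "Dp W1 V1 U1 W2 V2 U2 0 = Dp W1 V1 U1 W2 V2 U2 1 \<or>
         (\<lambda>k. real (Dp W1 V1 U1 W2 V2 U2 k)) \<in> \<Omega>(\<lambda>k. real k)"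
proof (cases "\<exists>S. W2 = W1 @ S \<and> V1 @ S = S @ V2")
  case True
  then obtain S where "W2 = W1 @ S" "V1 @ S = S @ V2" by blast
  from Dp_const[OF this, of U1 U2 1] show ?thesis by simp
next
  case False
  let ?M = "length W2 + 2 * p + 2"
  have "real (Dp W1 V1 U1 W2 V2 U2 k) \<ge> 1 * real k" if k: "k \<ge> ?M" for k
  proof -
    have "length (lcp (W1 @ wpow V1 k @ U1) (W2 @ wpow V2 k @ U2)) < length W2 + p"
      using core_bound[OF len W False, of k U1 U2] k by simp
    moreover have "k \<le> k * p" using len by simp
    ultimately have "k \<le> Dp W1 V1 U1 W2 V2 U2 k" unfolding Dp_def using len k
      by (simp only: length_append wpow_len)
    thus ?thesis by simp
  qed
  hence "(\<lambda>k. real (Dp W1 V1 U1 W2 V2 U2 k)) \<in> \<Omega>(\<lambda>k. real k)"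
    by (intro Omega_from_bound[where N="?M" and c=1]) auto
  thus ?thesis by blast
qed

lemma Dp_dich:
  "Dp W1 V1 U1 W2 V2 U2 0 = Dp W1 V1 U1 W2 V2 U2 1 \<or>
   (\<lambda>k. real (Dp W1 V1 U1 W2 V2 U2 k)) \<in> \<Omega>(\<lambda>k. real k)"
proof (cases "length V1 = length V2")
  case True
  show ?thesis
  proof (cases "length V1 = 0")
    case True
    then show ?thesis using \<open>length V1 = length V2\<close> by (simp add: Dp_def)
  next
    case False
    show ?thesis
    proof (cases "length W1 \<le> length W2")
      case True
      have p: "length V1 > 0" using False by simp
      show ?thesis
        by (rule Dp_eq_case[OF refl \<open>length V1 = length V2\<close>[symmetric] p True])
    next
      case F2: False
      have w21: "length W2 \<le> length W1" using F2 by simp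
      have "Dp W2 V2 U2 W1 V1 U1 0 = Dp W2 V2 U2 W1 V1 U1 1 \<or>
         (\<lambda>k. real (Dp W2 V2 U2 W1 V1 U1 k)) \<in> \<Omega>(\<lambda>k. real k)"
        using Dp_eq_case[OF \<open>length V1 = length V2\<close>[symmetric] refl _ w21] False by simp
      then show ?thesis unfolding Dp_sym[of W2 V2 U2 W1 V1 U1] .
    qed
  qed
next
  case False
  have main: "(\<lambda>k. real (Dp W1 V1 U1 W2 V2 U2 k)) \<in> \<Omega>(\<lambda>k. real k)"
    if lt: "length B1 < length A1" and
       eq: "\<And>k. Dp W1 V1 U1 W2 V2 U2 k = Dp X1 A1 Y1 X2 B1 Y2 k" for X1 A1 Y1 X2 B1 Y2 :: "'a list"
  proof -
    let ?M = "2 * length (X2 @ Y2)"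
    have "real (Dp W1 V1 U1 W2 V2 U2 k) \<ge> (1/2) * real k" if k: "k \<ge> ?M" for k
    proof -
      have "k * (length B1 + 1) \<le> k * length A1" using lt by (intro mult_le_mono2) simp
      hence "k * length B1 + k \<le> k * length A1" by (simp add: algebra_simps)
      moreover have "length (X1 @ wpow A1 k @ Y1) \<ge> k * length A1" by simp
      moreover have "length (X2 @ wpow B1 k @ Y2) = k * length B1 + length (X2 @ Y2)" by simp
      ultimately have "k - length (X2 @ Y2) \<le> Dp X1 A1 Y1 X2 B1 Y2 k"
        using Dp_ge1[of X1 A1 k Y1 X2 B1 Y2] by linarith
      hence "k - length (X2 @ Y2) \<le> Dp W1 V1 U1 W2 V2 U2 k" using eq[of k] by simp
      hence "2 * Dp W1 V1 U1 W2 V2 U2 k \<ge> k" using k by linarith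
      hence "2 * real (Dp W1 V1 U1 W2 V2 U2 k) \<ge> real k" by linarith
      thus ?thesis by simp
    qed
    thus ?thesis by (intro Omega_from_bound[where N="?M" and c="1/2"]) auto
  qed
  show ?thesis
  proof (cases "length V2 < length V1")
    case True
    then show ?thesis by (rule disjI2[OF main[OF _ refl]])
  next
    case F: False
    hence "length V1 < length V2" using False by simp
    then show ?thesis by (rule disjI2[OF main[OF _ Dp_sym]])
  qed
qed



fun opt :: "'a option \<Rightarrow> 'a list" where
  "opt None = []" | "opt (Some a) = [a]"

type_synonym ('s,'ot) trans = "(nat list \<times> 's option \<times> 'ot list \<times> nat list) set"

inductive path :: "('s,'ot) trans \<Rightarrow> nat list \<Rightarrow> nat list \<Rightarrow> 's list \<Rightarrow> 'ot list \<Rightarrow> bool"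
  for D where
  p_refl: "path D q q [] []"
| p_step: "(q, a, v, q') \<in> D \<Longrightarrow> path D q' r w ot \<Longrightarrow> path D q r (opt a @ w) (v @ ot)"

definition lang :: "('s,'ot) trans \<Rightarrow> nat list set \<Rightarrow> nat list set \<Rightarrow> ('s list \<times> 'ot list) set" where
  "lang D I F = {(w, ot). \<exists>i\<in>I. \<exists>f\<in>F. path D i f w ot}"

definition recog :: "('s list \<times> 'ot list) set \<Rightarrow> bool" where
  "recog A \<longleftrightarrow> (\<exists>(D :: ('s,'ot) trans) I F. finite D \<and> finite I \<and> finite F \<and> A = lang D I F)"

lemma path_trans: "path D q p w1 ot1 \<Longrightarrow> path D p r w2 ot2 \<Longrightarrow> path D q r (w1 @ w2) (ot1 @ ot2)"
  by (induction rule: path.induct) (auto intro: path.intros)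

lemma path_mono: "path D q r w ot \<Longrightarrow> D \<subseteq> D' \<Longrightarrow> path D' q r w ot"
  by (induction rule: path.induct) (auto intro: path.intros)

lemma path_one: "(q, a, v, r) \<in> D \<Longrightarrow> path D q r (opt a) v"
  using p_step[of q a v r D r "[]" "[]"] p_refl[of D r] by simp

definition tag :: "nat \<Rightarrow> ('s,'ot) trans \<Rightarrow> ('s,'ot) trans" where
  "tag b D = (\<lambda>(p, a, v, q). (b # p, a, v, b # q)) ` D"

lemma tag_mem: "(p, a, v, q) \<in> D \<Longrightarrow> (b # p, a, v, b # q) \<in> tag b D"
  unfolding tag_def by force

lemma tag_memD: "(x, a, v, y) \<in> tag b D \<Longrightarrow> \<exists>p q. x = b # p \<and> y = b # q \<and> (p, a, v, q) \<in> D"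
  unfolding tag_def by auto

lemma finite_tag: "finite D \<Longrightarrow> finite (tag b D)"
  unfolding tag_def by simp

lemma path_tag: "path D p q w ot \<Longrightarrow> path (tag b D) (b # p) (b # q) w ot"
  by (induction rule: path.induct) (auto intro: path.intros tag_mem)

lemma path_untag_aux:
  assumes "path D' x y w ot" "D' = tag b D \<union> R" "\<forall>(s, a, v, t) \<in> R. \<forall>p. s \<noteq> b # p"
  shows "\<And>p. x = b # p \<Longrightarrow> \<exists>q. y = b # q \<and> path D p q w ot"
  using assms(1)
proof (induction rule: path.induct)
  case (p_refl q)
  then show ?case by (auto intro: path.intros)
next
  case (p_step q a v q' r w ot)
  have "(q, a, v, q') \<notin> R" using assms(3) p_step.prems by auto
  hence "(q, a, v, q') \<in> tag b D" using p_step.hyps(1) assms(2) by auto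
  then obtain p1 p2 where "q = b # p1" "q' = b # p2" "(p1, a, v, p2) \<in> D"
    by (auto dest: tag_memD)
  moreover obtain q2 where "r = b # q2" "path D p2 q2 w ot" using p_step.IH \<open>q' = b # p2\<close> by blast
  ultimately show ?case using p_step.prems by (auto intro: path.intros)
qed

lemma path_untag:
  assumes "path (tag b D \<union> R) (b # p) y w ot" "\<forall>(s, a, v, t) \<in> R. \<forall>p. s \<noteq> b # p"
  shows "\<exists>q. y = b # q \<and> path D p q w ot"
  using path_untag_aux[OF assms(1) refl assms(2)] by blast

lemma path_end: "path D x y w ot \<Longrightarrow> y = x \<or> (\<exists>s a v. (s, a, v, y) \<in> D)"
  by (induction rule: path.induct) auto

lemma path_from_dead: "path D x y w ot \<Longrightarrow> (\<forall>(s, a, v, t) \<in> D. s \<noteq> x) \<Longrightarrow> y = x \<and> w = [] \<and> ot = []"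
  by (induction rule: path.induct) auto

lemma path_single_aux:
  "path D x y w ot \<Longrightarrow> D = {(s, a, v, t)} \<Longrightarrow> x = s \<Longrightarrow> y = t \<Longrightarrow> s \<noteq> t \<Longrightarrow> w = opt a \<and> ot = v"
proof (induction rule: path.induct)
  case (p_step q a' v' q' r w ot)
  hence q': "q' = t" "a' = a" "v' = v" by auto
  have "(\<forall>(s', a, v, t') \<in> D. s' \<noteq> q')" using q' p_step.prems by auto
  from path_from_dead[OF p_step.hyps(2) this] p_step.prems q' show ?case by simp
qed auto

lemma path_single:
  "path {(s, a, v, t)} s t w ot \<Longrightarrow> s \<noteq> t \<Longrightarrow> w = opt a \<and> ot = v"
  using path_single_aux by blast

lemma recog_empty: "recog {}"
  unfolding recog_def by (rule exI[of _ "{}"], rule exI[of _ "{}"], rule exI[of _ "{}"]) (simp add: lang_def)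

lemma recog_atom:
  fixes a :: "'s option" and v :: "'o list"
  shows "recog {(opt a, v)}"
proof -
  let ?D = "{([], a, v, [0::nat])} :: ('s,'o) trans"
  have "lang ?D {[]} {[0]} = {(opt a, v)}"
  proof
    show "lang ?D {[]} {[0]} \<subseteq> {(opt a, v)}"
      unfolding lang_def using path_single[of "[]" a v "[0]"] by auto
    show "{(opt a, v)} \<subseteq> lang ?D {[]} {[0]}"
      unfolding lang_def using path_one[of "[]" a v "[0]" ?D] by auto
  qed
  thus ?thesis unfolding recog_def by (intro exI[of _ ?D] exI[of _ "{[]}"] exI[of _ "{[0]}"]) simp
qed

lemma recog_union:
  assumes "recog A" "recog B" shows "recog (A \<union> B)"
proof -
  obtain D1 I1 F1 where 1: "finite D1" "finite I1" "finite F1" "A = lang D1 I1 F1"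
    using assms(1) unfolding recog_def by blast
  obtain D2 I2 F2 where 2: "finite D2" "finite I2" "finite F2" "B = lang D2 I2 F2"
    using assms(2) unfolding recog_def by blast
  let ?D = "tag 0 D1 \<union> tag 1 D2"
  let ?I = "Cons 0 ` I1 \<union> Cons 1 ` I2"
  let ?F = "Cons 0 ` F1 \<union> Cons 1 ` F2"
  have "lang ?D ?I ?F = A \<union> B"
  proof
    show "A \<union> B \<subseteq> lang ?D ?I ?F"
    proof
      fix x assume "x \<in> A \<union> B"
      then obtain w ot where x: "x = (w, ot)" by (cases x)
      show "x \<in> lang ?D ?I ?F"
      proof (cases "x \<in> A")
        case True
        then obtain i f where "i \<in> I1" "f \<in> F1" "path D1 i f w ot" using 1 x unfolding lang_def by auto
        moreover have "path ?D (0 # i) (0 # f) w ot"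
          using path_mono[OF path_tag[OF \<open>path D1 i f w ot\<close>]] by blast
        ultimately show ?thesis unfolding lang_def x by blast
      next
        case False
        hence "x \<in> B" using \<open>x \<in> A \<union> B\<close> by simp
        then obtain i f where "i \<in> I2" "f \<in> F2" "path D2 i f w ot" using 2 x unfolding lang_def by auto
        moreover have "path ?D (1 # i) (1 # f) w ot"
          using path_mono[OF path_tag[OF \<open>path D2 i f w ot\<close>]] by blast
        ultimately show ?thesis unfolding lang_def x by blast
      qed
    qed
    show "lang ?D ?I ?F \<subseteq> A \<union> B"
    proof
      fix x assume "x \<in> lang ?D ?I ?F"
      then obtain w ot i f where x: "x = (w, ot)" "i \<in> ?I" "f \<in> ?F" "path ?D i f w ot"
        unfolding lang_def by blast
      show "x \<in> A \<union> B"
      proof (cases "i \<in> Cons 0 ` I1")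
        case True
        then obtain i' where i': "i = 0 # i'" "i' \<in> I1" by blast
        have "\<forall>(s, a, v, t) \<in> tag 1 D2. \<forall>p. s \<noteq> 0 # p" by (auto dest: tag_memD)
        from path_untag[OF x(4)[unfolded i'(1)] this] obtain q where "f = 0 # q" "path D1 i' q w ot"
          by blast
        moreover have "q \<in> F1" using x(3) \<open>f = 0 # q\<close> by auto
        ultimately show ?thesis using 1 i' x(1) unfolding lang_def by blast
      next
        case False
        then obtain i' where i': "i = 1 # i'" "i' \<in> I2" using x(2) by blast
        have R: "\<forall>(s, a, v, t) \<in> tag 0 D1. \<forall>p. s \<noteq> 1 # p" by (auto dest: tag_memD)
        have eq: "?D = tag 1 D2 \<union> tag 0 D1" by blast
        from path_untag[OF x(4)[unfolded i'(1) eq] R]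
        obtain q where "f = 1 # q" "path D2 i' q w ot" by blast
        moreover have "q \<in> F2" using x(3) \<open>f = 1 # q\<close> by auto
        ultimately show ?thesis using 2 i' x(1) unfolding lang_def by blast
      qed
    qed
  qed
  moreover have "finite ?D" "finite ?I" "finite ?F" using 1 2 by (auto intro: finite_tag)
  ultimately show ?thesis unfolding recog_def
    by (intro exI[of _ ?D] exI[of _ ?I] exI[of _ ?F]) simp
qed

lemma recog_conc:
  assumes "recog A" "recog B" shows "recog (pconc A B)"
proof -
  obtain D1 I1 F1 where 1: "finite D1" "finite I1" "finite F1" "A = lang D1 I1 F1"
    using assms(1) unfolding recog_def by blast
  obtain D2 I2 F2 where 2: "finite D2" "finite I2" "finite F2" "B = lang D2 I2 F2"
    using assms(2) unfolding recog_def by blast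
  define E :: "('a,'b) trans" where "E = (\<lambda>(f, i). (0 # f, None, [], 1 # i)) ` (F1 \<times> I2)"
  define D where "D = tag 0 D1 \<union> tag 1 D2 \<union> E"
  let ?I = "Cons 0 ` I1"
  let ?F = "Cons 1 ` F2"
  have fE: "finite E" unfolding E_def using 1 2 by simp
  have Esrc: "\<forall>(s, a, v, t) \<in> tag 0 D1 \<union> E. \<forall>p. s \<noteq> 1 # p"
    unfolding E_def by (auto dest: tag_memD)
  have key: "path D x y w ot \<Longrightarrow> x = 0 # p \<Longrightarrow> y = 1 # f \<Longrightarrow>
      \<exists>w1 ot1 w2 ot2 f1 i2. f1 \<in> F1 \<and> i2 \<in> I2 \<and> path D1 p f1 w1 ot1 \<and> path D2 i2 f w2 ot2 \<and>
        w = w1 @ w2 \<and> ot = ot1 @ ot2" for x y w ot p f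
  proof (induction arbitrary: p rule: path.induct)
    case (p_refl q)
    then show ?case by simp
  next
    case (p_step q a v q' r w ot)
    show ?case
    proof (cases "(q, a, v, q') \<in> tag 0 D1")
      case True
      then obtain p' where p': "q' = 0 # p'" "(p, a, v, p') \<in> D1"
        using p_step.prems by (auto dest: tag_memD)
      from p_step.IH[OF p'(1) p_step.prems(2)] obtain w1 ot1 w2 ot2 f1 i2 where
        h: "f1 \<in> F1" "i2 \<in> I2" "path D1 p' f1 w1 ot1" "path D2 i2 f w2 ot2" "w = w1 @ w2" "ot = ot1 @ ot2"
        by blast
      have "path D1 p f1 (opt a @ w1) (v @ ot1)" using p'(2) h(3) by (rule path.p_step)
      thus ?thesis using h by (intro exI[of _ "opt a @ w1"] exI[of _ "v @ ot1"] exI[of _ w2] exI[of _ ot2]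
          exI[of _ f1] exI[of _ i2]) simp
    next
      case False
      have "(q, a, v, q') \<notin> tag 1 D2" using p_step.prems by (auto dest: tag_memD)
      hence "(q, a, v, q') \<in> E" using False p_step.hyps(1) unfolding D_def by blast
      then obtain i where i: "p \<in> F1" "i \<in> I2" "a = None" "v = []" "q' = 1 # i"
        using p_step.prems unfolding E_def by auto
      have eq: "D = tag 1 D2 \<union> (tag 0 D1 \<union> E)" unfolding D_def by blast
      from path_untag[OF p_step.hyps(2)[unfolded eq i(5)] Esrc]
      have "path D2 i f w ot" using p_step.prems by auto
      moreover have "path D1 p p [] []" by (rule path.p_refl)
      ultimately show ?thesis using i by (intro exI[of _ "[]"] exI[of _ "[]"] exI[of _ w] exI[of _ ot]
          exI[of _ p] exI[of _ i]) simp
    qed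
  qed
  have "lang D ?I ?F = pconc A B"
  proof
    show "lang D ?I ?F \<subseteq> pconc A B"
    proof
      fix x assume "x \<in> lang D ?I ?F"
      then obtain w ot i f where x: "x = (w, ot)" "i \<in> I1" "f \<in> F2" "path D (0 # i) (1 # f) w ot"
        unfolding lang_def by blast
      from key[OF x(4) refl refl] obtain w1 ot1 w2 ot2 f1 i2 where
        h: "f1 \<in> F1" "i2 \<in> I2" "path D1 i f1 w1 ot1" "path D2 i2 f w2 ot2" "w = w1 @ w2" "ot = ot1 @ ot2"
        by blast
      have "(w1, ot1) \<in> A" using 1 h x unfolding lang_def by blast
      moreover have "(w2, ot2) \<in> B" using 2 h x unfolding lang_def by blast
      ultimately show "x \<in> pconc A B" unfolding pconc_def x h by force
    qed
    show "pconc A B \<subseteq> lang D ?I ?F"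
    proof
      fix x assume "x \<in> pconc A B"
      then obtain w1 ot1 w2 ot2 where x: "x = (w1 @ w2, ot1 @ ot2)" "(w1, ot1) \<in> A" "(w2, ot2) \<in> B"
        unfolding pconc_def by force
      obtain i1 f1 where a: "i1 \<in> I1" "f1 \<in> F1" "path D1 i1 f1 w1 ot1" using x 1 unfolding lang_def by blast
      obtain i2 f2 where b: "i2 \<in> I2" "f2 \<in> F2" "path D2 i2 f2 w2 ot2" using x 2 unfolding lang_def by blast
      have p1: "path D (0 # i1) (0 # f1) w1 ot1"
        using path_mono[OF path_tag[OF a(3)]] unfolding D_def by blast
      have p2: "path D (1 # i2) (1 # f2) w2 ot2"
        using path_mono[OF path_tag[OF b(3)]] unfolding D_def by blast
      have "(0 # f1, None, [], 1 # i2) \<in> E" unfolding E_def using a b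
        by (intro image_eqI[of _ _ "(f1, i2)"]) auto
      hence "(0 # f1, None, [], 1 # i2) \<in> D" unfolding D_def by blast
      from path.p_step[OF this p2] have "path D (0 # f1) (1 # f2) w2 ot2" by simp
      from path_trans[OF p1 this] have "path D (0 # i1) (1 # f2) (w1 @ w2) (ot1 @ ot2)" .
      thus "x \<in> lang D ?I ?F" unfolding lang_def x using a b by blast
    qed
  qed
  moreover have "finite D" "finite ?I" "finite ?F" using 1 2 fE unfolding D_def by (auto intro: finite_tag)
  ultimately show ?thesis unfolding recog_def
    by (intro exI[of _ D] exI[of _ ?I] exI[of _ ?F]) simp
qed

lemma recog_star:
  assumes "recog A" shows "recog (pstar A)"
proof -
  obtain D0 I0 F0 where 0: "finite D0" "finite I0" "finite F0" "A = lang D0 I0 F0"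
    using assms(1) unfolding recog_def by blast
  define E :: "('a,'b) trans" where "E = (\<lambda>(f, i). (0 # f, None, [], 0 # i)) ` (F0 \<times> I0)"
  define D where "D = tag 0 D0 \<union> E"
  let ?I = "insert [] (Cons 0 ` I0)"
  let ?F = "insert [] (Cons 0 ` F0)"
  have fE: "finite E" unfolding E_def using 0 by simp
  have dead: "\<forall>(s, a, v, t) \<in> D. s \<noteq> []" unfolding D_def E_def by (auto dest: tag_memD)
  have tgt: "\<forall>(s, a, v, t) \<in> D. \<exists>q. t = 0 # q" unfolding D_def E_def by (auto dest: tag_memD)
  have key: "path D x y w ot \<Longrightarrow> x = 0 # p \<Longrightarrow> y = 0 # f \<Longrightarrow> f \<in> F0 \<Longrightarrow>
      \<exists>w1 ot1 w2 ot2 f1. f1 \<in> F0 \<and> path D0 p f1 w1 ot1 \<and> (w2, ot2) \<in> pstar A \<and>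
        w = w1 @ w2 \<and> ot = ot1 @ ot2" for x y w ot p f
  proof (induction arbitrary: p rule: path.induct)
    case (p_refl q)
    then show ?case by (intro exI[of _ "[]"] exI[of _ "[]"] exI[of _ "[]"] exI[of _ "[]"] exI[of _ f])
      (auto intro: path.p_refl pstar.pstar_nil)
  next
    case (p_step q a v q' r w ot)
    show ?case
    proof (cases "(q, a, v, q') \<in> tag 0 D0")
      case True
      then obtain p' where p': "q' = 0 # p'" "(p, a, v, p') \<in> D0"
        using p_step.prems by (auto dest: tag_memD)
      from p_step.IH[OF p'(1) p_step.prems(2,3)] obtain w1 ot1 w2 ot2 f1 where
        h: "f1 \<in> F0" "path D0 p' f1 w1 ot1" "(w2, ot2) \<in> pstar A" "w = w1 @ w2" "ot = ot1 @ ot2"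
        by blast
      have "path D0 p f1 (opt a @ w1) (v @ ot1)" using p'(2) h(2) by (rule path.p_step)
      thus ?thesis using h by (intro exI[of _ "opt a @ w1"] exI[of _ "v @ ot1"] exI[of _ w2] exI[of _ ot2]
          exI[of _ f1]) simp
    next
      case False
      hence "(q, a, v, q') \<in> E" using p_step.hyps(1) unfolding D_def by blast
      then obtain i where i: "p \<in> F0" "i \<in> I0" "a = None" "v = []" "q' = 0 # i"
        using p_step.prems unfolding E_def by auto
      from p_step.IH[OF i(5) p_step.prems(2,3)] obtain w1 ot1 w2 ot2 f1 where
        h: "f1 \<in> F0" "path D0 i f1 w1 ot1" "(w2, ot2) \<in> pstar A" "w = w1 @ w2" "ot = ot1 @ ot2"
        by blast
      have "(w1, ot1) \<in> A" using 0 h i unfolding lang_def by blast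
      from pstar.pstar_step[OF this h(3)] have "(w, ot) \<in> pstar A" using h by simp
      moreover have "path D0 p p [] []" by (rule path.p_refl)
      ultimately show ?thesis using i by (intro exI[of _ "[]"] exI[of _ "[]"] exI[of _ w] exI[of _ ot]
          exI[of _ p]) simp
    qed
  qed
  have "lang D ?I ?F = pstar A"
  proof
    show "lang D ?I ?F \<subseteq> pstar A"
    proof
      fix x assume "x \<in> lang D ?I ?F"
      then obtain w ot i f where x: "x = (w, ot)" "i \<in> ?I" "f \<in> ?F" "path D i f w ot"
        unfolding lang_def by blast
      show "x \<in> pstar A"
      proof (cases "i = []")
        case True
        from path_from_dead[OF x(4)] dead True have "w = [] \<and> ot = []" by auto
        thus ?thesis using x(1) by (simp add: pstar.pstar_nil)
      next
        case False
        then obtain i' where i': "i = 0 # i'" "i' \<in> I0" using x(2) by blast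
        have "f \<noteq> []"
        proof
          assume "f = []"
          from path_end[OF x(4)] show False using tgt \<open>f = []\<close> i'(1) by auto
        qed
        then obtain f' where f': "f = 0 # f'" "f' \<in> F0" using x(3) by blast
        from key[OF x(4) i'(1) f'] obtain w1 ot1 w2 ot2 f1 where
          h: "f1 \<in> F0" "path D0 i' f1 w1 ot1" "(w2, ot2) \<in> pstar A" "w = w1 @ w2" "ot = ot1 @ ot2"
          by blast
        have "(w1, ot1) \<in> A" using 0 h i' unfolding lang_def by blast
        from pstar.pstar_step[OF this h(3)] show ?thesis using h x(1) by simp
      qed
    qed
    show "pstar A \<subseteq> lang D ?I ?F"
    proof
      fix x assume "x \<in> pstar A"
      then show "x \<in> lang D ?I ?F"
      proof (induction rule: pstar.induct)
        case pstar_nil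
        then show ?case unfolding lang_def by (auto intro: path.p_refl)
      next
        case (pstar_step p q)
        obtain w1 ot1 where pp: "p = (w1, ot1)" by (cases p)
        obtain i1 f1 where a: "i1 \<in> I0" "f1 \<in> F0" "path D0 i1 f1 w1 ot1"
          using pstar_step.hyps(1) 0 pp unfolding lang_def by blast
        have p1: "path D (0 # i1) (0 # f1) w1 ot1"
          using path_mono[OF path_tag[OF a(3)]] unfolding D_def by blast
        obtain w2 ot2 i f where q: "q = (w2, ot2)" "i \<in> ?I" "f \<in> ?F" "path D i f w2 ot2"
          using pstar_step.IH unfolding lang_def by blast
        show ?case
        proof (cases "i = []")
          case True
          from path_from_dead[OF q(4)] dead True have "w2 = [] \<and> ot2 = []" by auto
          thus ?thesis using p1 a pp q unfolding lang_def by auto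
        next
          case False
          then obtain i' where i': "i = 0 # i'" "i' \<in> I0" using q(2) by blast
          have "(0 # f1, None, [], 0 # i') \<in> E" unfolding E_def using a i'
            by (intro image_eqI[of _ _ "(f1, i')"]) auto
          hence "(0 # f1, None, [], 0 # i') \<in> D" unfolding D_def by blast
          from path.p_step[OF this q(4)[unfolded i'(1)]]
          have "path D (0 # f1) f w2 ot2" by simp
          from path_trans[OF p1 this] show ?thesis using a q pp unfolding lang_def by auto
        qed
      qed
    qed
  qed
  moreover have "finite D" "finite ?I" "finite ?F" using 0 fE unfolding D_def by (auto intro: finite_tag)
  ultimately show ?thesis unfolding recog_def
    by (intro exI[of _ D] exI[of _ ?I] exI[of _ ?F]) simp
qed

lemma recog_single:
  fixes u :: "'s list" and v :: "'o list"
  shows "recog {(u, v)}"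
proof -
  have "recog {(u, [] :: 'o list)}"
  proof (induction u)
    case Nil
    then show ?case using recog_atom[of None "[]"] by simp
  next
    case (Cons a u)
    have e: "pconc {([a], [] :: 'o list)} {(u, [])} = {(a # u, [])}" unfolding pconc_def by auto
    have "recog (pconc {([a], [] :: 'o list)} {(u, [])})"
      using recog_conc[OF recog_atom[of "Some a" "[] :: 'o list"] Cons] by simp
    then show ?case unfolding e .
  qed
  moreover have e: "pconc {([] :: 's list, v)} {(u, [])} = {(u, v)}" unfolding pconc_def by auto
  moreover have "recog {([] :: 's list, v)}" using recog_atom[of None v] by simp
  ultimately show ?thesis using recog_conc[of "{([] :: 's list, v)}" "{(u, [])}"] by metis
qed

lemma recog_finite: "finite A \<Longrightarrow> recog A"
proof (induction rule: finite_induct)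
  case empty
  then show ?case by (rule recog_empty)
next
  case (insert x F)
  obtain u v where "x = (u, v)" by (cases x)
  then show ?case using recog_union[OF recog_single[of u v] insert.IH] by simp
qed

lemma rational_recog: "A \<in> rational_sets \<Longrightarrow> recog A"
  by (induction rule: rational_sets.induct)
    (auto intro: recog_finite recog_union recog_conc recog_star)



fun mark :: "'a option \<Rightarrow> 'q \<Rightarrow> 'q list" where
  "mark None q = []" | "mark (Some a) q = [q]"

inductive pathL :: "('s,'o) trans \<Rightarrow> nat list \<Rightarrow> nat list \<Rightarrow> 's list \<Rightarrow> 'o list \<Rightarrow> nat list list \<Rightarrow> bool"
  for D where
  pl_refl: "pathL D q q [] [] []"
| pl_step: "(q, a, v, q') \<in> D \<Longrightarrow> pathL D q' r w ot ss \<Longrightarrow> pathL D q r (opt a @ w) (v @ ot) (mark a q' @ ss)"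

lemma path_pathL: "path D q r w ot \<Longrightarrow> \<exists>ss. pathL D q r w ot ss"
  by (induction rule: path.induct) (auto intro: pathL.intros)

lemma pathL_path: "pathL D q r w ot ss \<Longrightarrow> path D q r w ot"
  by (induction rule: pathL.induct) (auto intro: path.intros)

lemma pathL_len: "pathL D q r w ot ss \<Longrightarrow> length ss = length w"
proof (induction rule: pathL.induct)
  case (pl_step q a v q' r w ot ss)
  then show ?case by (cases a) auto
qed simp

lemma pathL_set: "pathL D q r w ot ss \<Longrightarrow> set ss \<subseteq> {t. \<exists>s a v. (s, a, v, t) \<in> D}"
proof (induction rule: pathL.induct)
  case (pl_step q a v q' r w ot ss)
  then show ?case by (cases a) auto
qed simp

lemma pathL_split:
  "pathL D q r w ot ss \<Longrightarrow> j < length ss \<Longrightarrow> \<exists>w1 w2 ot1 ot2.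
     pathL D q (ss ! j) w1 ot1 (take (Suc j) ss) \<and> pathL D (ss ! j) r w2 ot2 (drop (Suc j) ss) \<and>
     w = w1 @ w2 \<and> ot = ot1 @ ot2"
proof (induction arbitrary: j rule: pathL.induct)
  case (pl_refl q)
  then show ?case by simp
next
  case (pl_step q a v q' r w ot ss)
  show ?case
  proof (cases a)
    case None
    from pl_step.IH[of j] pl_step.prems None obtain w1 w2 ot1 ot2 where
      h: "pathL D q' (ss ! j) w1 ot1 (take (Suc j) ss)" "pathL D (ss ! j) r w2 ot2 (drop (Suc j) ss)"
        "w = w1 @ w2" "ot = ot1 @ ot2" by auto
    from pathL.pl_step[OF pl_step.hyps(1) h(1)] None
    have "pathL D q (ss ! j) w1 (v @ ot1) (take (Suc j) ss)" by simp
    then show ?thesis using h None by (intro exI[of _ w1] exI[of _ w2] exI[of _ "v @ ot1"]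
          exI[of _ ot2]) auto
  next
    case (Some b)
    show ?thesis
    proof (cases j)
      case 0
      have "pathL D q q' ([b] @ []) (v @ []) ([q'] @ [])"
        using pathL.pl_step[OF pl_step.hyps(1) pathL.pl_refl] Some by simp
      then show ?thesis using pl_step.hyps(2) Some 0 by fastforce
    next
      case (Suc j')
      from pl_step.IH[of j'] pl_step.prems Some Suc obtain w1 w2 ot1 ot2 where
        h: "pathL D q' (ss ! j') w1 ot1 (take (Suc j') ss)" "pathL D (ss ! j') r w2 ot2 (drop (Suc j') ss)"
          "w = w1 @ w2" "ot = ot1 @ ot2" by auto
      from pathL.pl_step[OF pl_step.hyps(1) h(1)] Some
      have "pathL D q (ss ! j') (b # w1) (v @ ot1) (q' # take (Suc j') ss)" by simp
      then show ?thesis using h Some Suc by (intro exI[of _ "b # w1"] exI[of _ w2] exI[of _ "v @ ot1"]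
          exI[of _ ot2]) auto
    qed
  qed
qed

lemma pathL_loop:
  assumes P: "pathL D q r w ot ss" and j: "j1 < j2" "j2 < length ss" "ss ! j1 = ss ! j2"
  shows "\<exists>u v z. path D q (ss ! j1) (take (Suc j1) w) u \<and>
     path D (ss ! j1) (ss ! j1) (take (j2 - j1) (drop (Suc j1) w)) v \<and>
     path D (ss ! j1) r (drop (Suc j2) w) z \<and> ot = u @ v @ z"
proof -
  obtain w1 w2 ot1 ot2 where
    h: "pathL D q (ss ! j1) w1 ot1 (take (Suc j1) ss)" "pathL D (ss ! j1) r w2 ot2 (drop (Suc j1) ss)"
       "w = w1 @ w2" "ot = ot1 @ ot2"
    using pathL_split[OF P, of j1] j by auto
  have l1: "length w1 = Suc j1" using pathL_len[OF h(1)] j by simp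
  have w1: "w1 = take (Suc j1) w" "w2 = drop (Suc j1) w" using h(3) l1 by auto
  let ?j = "j2 - Suc j1"
  have jl: "?j < length (drop (Suc j1) ss)" using j by simp
  have jn: "drop (Suc j1) ss ! ?j = ss ! j1" using j by simp
  obtain w3 w4 ot3 ot4 where
    g: "pathL D (ss ! j1) (ss ! j1) w3 ot3 (take (Suc ?j) (drop (Suc j1) ss))"
       "pathL D (ss ! j1) r w4 ot4 (drop (Suc ?j) (drop (Suc j1) ss))"
       "w2 = w3 @ w4" "ot2 = ot3 @ ot4"
    using pathL_split[OF h(2) jl] unfolding jn by blast
  have l3: "length w3 = j2 - j1" using pathL_len[OF g(1)] j by simp
  have w3: "w3 = take (j2 - j1) w2" "w4 = drop (j2 - j1) w2" using g(3) l3 by auto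
  have w4: "w4 = drop (Suc j2) w" using w3(2) w1(2) j by simp
  show ?thesis
    using pathL_path[OF h(1)] pathL_path[OF g(1)] pathL_path[OF g(2)] h(4) g(4) w1 w3 w4
    by (intro exI[of _ ot1] exI[of _ ot3] exI[of _ ot4]) auto
qed

lemma path_pump: "path D p p y v \<Longrightarrow> path D p p (wpow y k) (wpow v k)"
proof (induction k)
  case 0
  then show ?case by (simp add: path.p_refl)
next
  case (Suc k)
  then show ?case using path_trans[of D p p y v p "wpow y k" "wpow v k"] by (simp add: wpow_Suc)
qed



lemma rat_fun_path:
  assumes "rational_fun (t :: 's list \<Rightarrow> 'o list option)"
  shows "\<exists>(D :: ('s,'o) trans) I F. finite D \<and> (\<forall>w ot. t w = Some ot \<longleftrightarrow> (\<exists>i\<in>I. \<exists>f\<in>F. path D i f w ot))"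
proof -
  have "recog (graph_of t)" using assms rational_recog unfolding rational_fun_def by blast
  then obtain D I F where "finite D" "graph_of t = lang (D :: ('s,'o) trans) I F"
    unfolding recog_def by blast
  moreover have "t w = Some ot \<longleftrightarrow> (w, ot) \<in> graph_of t" for w ot unfolding graph_of_def by simp
  ultimately show ?thesis unfolding lang_def by (intro exI[of _ D] exI[of _ I] exI[of _ F]) auto
qed

lemma wdist_Dp:
  "wdist (u1 @ wpow v1 k @ w1) (u2 @ wpow v2 k @ w2) =
   Dp (rev w1) (rev v1) (rev u1) (rev w2) (rev v2) (rev u2) k"
  unfolding wdist_def lcsuffix_def Dp_def by (simp add: wpow_rev)

lemma targets_finite: "finite D \<Longrightarrow> finite {t. \<exists>s a v. (s, a, v, t) \<in> (D :: ('s,'o) trans)}"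
proof -
  assume "finite D"
  moreover have "{t. \<exists>s a v. (s, a, v, t) \<in> D} = (\<lambda>(s, a, v, t). t) ` D" by force
  ultimately show ?thesis by simp
qed

lemma loop_exists:
  fixes t1 t2 :: "('s::finite) list \<Rightarrow> ('o::finite) list option"
  assumes "rational_fun t1" and "rational_fun t2"
    and "\<not> adjacent t1 t2"
  shows "\<exists>x y z. (\<forall>k. x @ wpow y k @ z \<in> dom t1 \<inter> dom t2) \<and>
            (\<lambda>k. real (wdist (the (t1 (x @ wpow y k @ z))) (the (t2 (x @ wpow y k @ z)))))
              \<in> \<Omega>(\<lambda>k. real k)"
proof (rule ccontr)
  assume nL: "\<not> ?thesis"
  obtain D1 :: "('s,'o) trans" and I1 F1 where D1: "finite D1"
    and g1: "\<And>w ot. t1 w = Some ot \<longleftrightarrow> (\<exists>i\<in>I1. \<exists>f\<in>F1. path D1 i f w ot)"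
    using rat_fun_path[OF assms(1)] by blast
  obtain D2 :: "('s,'o) trans" and I2 F2 where D2: "finite D2"
    and g2: "\<And>w ot. t2 w = Some ot \<longleftrightarrow> (\<exists>i\<in>I2. \<exists>f\<in>F2. path D2 i f w ot)"
    using rat_fun_path[OF assms(2)] by blast
  define dd where "dd w = wdist (the (t1 w)) (the (t2 w))" for w
  define T1 where "T1 = {t. \<exists>s a v. (s, a, v, t) \<in> D1}"
  define T2 where "T2 = {t. \<exists>s a v. (s, a, v, t) \<in> D2}"
  have fT: "finite (T1 \<times> T2)" unfolding T1_def T2_def using targets_finite D1 D2 by blast
  define N where "N = card (T1 \<times> T2)"
  define Sm where "Sm = {w \<in> dom t1 \<inter> dom t2. length w \<le> N}"
  have fSm: "finite Sm"
  proof -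
    have "Sm \<subseteq> {xs. set xs \<subseteq> UNIV \<and> length xs \<le> N}" unfolding Sm_def by auto
    moreover have "finite {xs :: 's list. set xs \<subseteq> UNIV \<and> length xs \<le> N}"
      by (rule finite_lists_length_le) simp
    ultimately show ?thesis by (rule finite_subset)
  qed
  define B where "B = Max (insert 0 (dd ` Sm))"
  have bound: "w \<in> dom t1 \<inter> dom t2 \<Longrightarrow> dd w \<le> B" for w
  proof (induction "length w" arbitrary: w rule: less_induct)
    case less
    show ?case
    proof (cases "length w \<le> N")
      case True
      hence "w \<in> Sm" using less.prems unfolding Sm_def by auto
      thus ?thesis unfolding B_def using fSm by (intro Max_ge) auto
    next
      case False
      obtain o1 o2 where o: "t1 w = Some o1" "t2 w = Some o2" using less.prems by auto
      obtain i1 f1 where p1: "i1 \<in> I1" "f1 \<in> F1" "path D1 i1 f1 w o1" using g1 o(1) by blast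
      obtain i2 f2 where p2: "i2 \<in> I2" "f2 \<in> F2" "path D2 i2 f2 w o2" using g2 o(2) by blast
      obtain ss1 where s1: "pathL D1 i1 f1 w o1 ss1" using path_pathL[OF p1(3)] by blast
      obtain ss2 where s2: "pathL D2 i2 f2 w o2 ss2" using path_pathL[OF p2(3)] by blast
      have l1: "length ss1 = length w" using pathL_len[OF s1] .
      have l2: "length ss2 = length w" using pathL_len[OF s2] .
      define Z where "Z = zip ss1 ss2"
      have lZ: "length Z = length w" unfolding Z_def using l1 l2 by simp
      have sZ: "set Z \<subseteq> T1 \<times> T2" unfolding Z_def T1_def T2_def
        using pathL_set[OF s1] pathL_set[OF s2] by (auto dest: set_zip_leftD set_zip_rightD)
      have "\<not> distinct Z"
      proof
        assume "distinct Z"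
        hence "card (set Z) = length w" using distinct_card lZ by metis
        moreover have "card (set Z) \<le> N" unfolding N_def using card_mono[OF fT sZ] .
        ultimately show False using False by simp
      qed
      then obtain j1 j2 where j: "j1 < j2" "j2 < length w" "Z ! j1 = Z ! j2"
        unfolding distinct_conv_nth lZ by (metis linorder_neqE_nat)
      have e1: "ss1 ! j1 = ss1 ! j2" and e2: "ss2 ! j1 = ss2 ! j2"
        using j l1 l2 unfolding Z_def by auto
      define x where "x = take (Suc j1) w"
      define y where "y = take (j2 - j1) (drop (Suc j1) w)"
      define z where "z = drop (Suc j2) w"
      have wxyz: "w = x @ y @ z"
      proof -
        have "drop (Suc j1) w = y @ drop (j2 - j1) (drop (Suc j1) w)" unfolding y_def
          by (rule append_take_drop_id[symmetric])
        moreover have "drop (j2 - j1) (drop (Suc j1) w) = z" unfolding z_def using j by simp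
        ultimately show ?thesis unfolding x_def by (metis append_take_drop_id)
      qed
      have ly: "length y = j2 - j1" unfolding y_def using j by simp
      obtain u1 v1 z1 where q1: "path D1 i1 (ss1 ! j1) x u1" "path D1 (ss1 ! j1) (ss1 ! j1) y v1"
        "path D1 (ss1 ! j1) f1 z z1" "o1 = u1 @ v1 @ z1"
        using pathL_loop[OF s1 j(1) _ e1] j l1 unfolding x_def y_def z_def by auto
      obtain u2 v2 z2 where q2: "path D2 i2 (ss2 ! j1) x u2" "path D2 (ss2 ! j1) (ss2 ! j1) y v2"
        "path D2 (ss2 ! j1) f2 z z2" "o2 = u2 @ v2 @ z2"
        using pathL_loop[OF s2 j(1) _ e2] j l2 unfolding x_def y_def z_def by auto
      have T1k: "t1 (x @ wpow y k @ z) = Some (u1 @ wpow v1 k @ z1)" for k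
        using g1 p1(1,2) path_trans[OF q1(1) path_trans[OF path_pump[OF q1(2)] q1(3)]] by blast
      have T2k: "t2 (x @ wpow y k @ z) = Some (u2 @ wpow v2 k @ z2)" for k
        using g2 p2(1,2) path_trans[OF q2(1) path_trans[OF path_pump[OF q2(2)] q2(3)]] by blast
      have dk: "dd (x @ wpow y k @ z) = Dp (rev z1) (rev v1) (rev u1) (rev z2) (rev v2) (rev u2) k" for k
        unfolding dd_def T1k T2k by (simp add: wdist_Dp)
      have domk: "\<forall>k. x @ wpow y k @ z \<in> dom t1 \<inter> dom t2" using T1k T2k by auto
      have "\<not> (\<lambda>k. real (Dp (rev z1) (rev v1) (rev u1) (rev z2) (rev v2) (rev u2) k)) \<in> \<Omega>(\<lambda>k. real k)"
      proof
        assume "(\<lambda>k. real (Dp (rev z1) (rev v1) (rev u1) (rev z2) (rev v2) (rev u2) k)) \<in> \<Omega>(\<lambda>k. real k)"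
        hence "(\<lambda>k. real (dd (x @ wpow y k @ z))) \<in> \<Omega>(\<lambda>k. real k)" unfolding dk .
        thus False using nL domk unfolding dd_def by blast
      qed
      hence eq01: "Dp (rev z1) (rev v1) (rev u1) (rev z2) (rev v2) (rev u2) 0 =
                   Dp (rev z1) (rev v1) (rev u1) (rev z2) (rev v2) (rev u2) 1"
        using Dp_dich by blast
      have "wpow y 1 = y" by (simp add: wpow_Suc)
      hence "dd w = dd (x @ z)" using dk[of 1] dk[of 0] eq01 wxyz by simp
      moreover have "x @ z \<in> dom t1 \<inter> dom t2" using domk[rule_format, of 0] by simp
      moreover have "length (x @ z) < length w" using wxyz ly j by simp
      ultimately show ?thesis using less.hyps by metis
    qed
  qed
  have "(SUP w \<in> dom t1 \<inter> dom t2. ereal (real (wdist (the (t1 w)) (the (t2 w))))) \<le> ereal (real B)"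
    using bound unfolding dd_def by (intro SUP_least) simp
  hence "adjacent t1 t2" unfolding adjacent_def using order.strict_trans1 by fastforce
  thus False using assms(3) by blast
qed

theorem lemma21:
  fixes t1 t2 :: "('s::finite) list \<Rightarrow> ('o::finite) list option"
  assumes "rational_fun t1" and "rational_fun t2"
    and "\<not> adjacent t1 t2"
  shows "(\<exists>x y z. (\<forall>k. x @ wpow y k @ z \<in> dom t1 \<inter> dom t2) \<and>
            (\<lambda>k. real (wdist (the (t1 (x @ wpow y k @ z))) (the (t2 (x @ wpow y k @ z)))))
              \<in> \<Omega>(\<lambda>k. real k))
       \<and> (\<exists>f :: nat \<Rightarrow> 's list. (\<forall>k. f k \<in> dom t1 \<inter> dom t2 \<and>
              wdist (the (t1 (f k))) (the (t2 (f k))) \<ge> k) \<and>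
            (\<lambda>k. real (length (f k))) \<in> O(\<lambda>k. real k))"
proof -
  from loop_exists[OF assms] obtain x y z where
    dom: "\<forall>k. x @ wpow y k @ z \<in> dom t1 \<inter> dom t2" and
    om: "(\<lambda>k. real (wdist (the (t1 (x @ wpow y k @ z))) (the (t2 (x @ wpow y k @ z)))))
              \<in> \<Omega>(\<lambda>k. real k)" by blast
  define d where "d k = wdist (the (t1 (x @ wpow y k @ z))) (the (t2 (x @ wpow y k @ z)))" for k
  from om obtain c where c: "c > 0" "eventually (\<lambda>k. norm (real (d k)) \<ge> c * norm (real k)) at_top"
    unfolding d_def by (elim landau_omega.bigE) auto
  then obtain K where K: "\<And>k. k \<ge> K \<Longrightarrow> real (d k) \<ge> c * real k"
    unfolding eventually_at_top_linorder by auto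
  define m where "m = nat \<lceil>1 / c\<rceil>"
  have cm: "c * real m \<ge> 1"
  proof -
    have "real m \<ge> 1 / c" unfolding m_def by (rule real_nat_ceiling_ge)
    hence "c * real m \<ge> c * (1 / c)" using c(1) by (intro mult_left_mono) auto
    thus ?thesis using c(1) by simp
  qed
  define f where "f k = x @ wpow y (m * k + K) @ z" for k
  have "d (m * k + K) \<ge> k" for k
  proof -
    have "real (d (m * k + K)) \<ge> c * real (m * k + K)" using K[of "m * k + K"] by simp
    moreover have "c * real (m * k + K) = c * real m * real k + c * real K"
      by (simp add: algebra_simps)
    moreover have "c * real K \<ge> 0" using c(1) by simp
    moreover have "c * real m * real k \<ge> real k"
      using mult_right_mono[OF cm, of "real k"] by simp
    ultimately have "real (d (m * k + K)) \<ge> real k" by linarith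
    thus ?thesis by simp
  qed
  hence P1: "\<forall>k. f k \<in> dom t1 \<inter> dom t2 \<and> wdist (the (t1 (f k))) (the (t2 (f k))) \<ge> k"
    using dom unfolding f_def d_def by blast
  define C where "C = length x + length z + K * length y + m * length y"
  have "(\<lambda>k. real (length (f k))) \<in> O(\<lambda>k. real k)"
  proof (rule bigoI[of _ "real C"])
    show "\<forall>\<^sub>F k in at_top. norm (real (length (f k))) \<le> real C * norm (real k)"
      unfolding eventually_at_top_linorder
    proof (intro exI[of _ 1] allI impI)
      fix k :: nat assume k: "k \<ge> 1"
      have "length (f k) = length x + length z + K * length y + m * k * length y"
        unfolding f_def by (simp add: algebra_simps)
      also have "\<dots> \<le> (length x + length z + K * length y) * k + m * length y * k"
      proof -
        have "(length x + length z + K * length y) * 1 \<le> (length x + length z + K * length y) * k"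
          by (rule mult_le_mono2[OF k])
        hence "length x + length z + K * length y \<le> (length x + length z + K * length y) * k"
          by (simp only: mult_1_right)
        moreover have "m * k * length y = m * length y * k" by simp
        ultimately show ?thesis by linarith
      qed
      also have "\<dots> = C * k" unfolding C_def by (simp add: algebra_simps)
      finally have "length (f k) \<le> C * k" .
      hence "real (length (f k)) \<le> real C * real k" by (metis of_nat_le_iff of_nat_mult)
      thus "norm (real (length (f k))) \<le> real C * norm (real k)" by simp
    qed
  qed
  thus ?thesis using P1 dom om by blast
qed

end
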